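(* In the standing setup, the vector $(\partial\tilde f_0/\partial x_1,\dots,\partial\tilde f_0/\partial x_n)$ does not vanish identically on any torus orbit of $X$.
   Context: Standing setup. $\mathbf F=(f_0,\dots,f_m)$ is a generic sparse system $f_i=\sum_{\alpha\in\mathcal A_i}c_{\alpha,i}X^\alpha\in\mathbb C[X_1,\dots,X_n]$ (generic: coefficients in a nonempty Zariski open subset of $\prod_i\mathbb C^{\mathcal A_i}$) with admissible support $\mathcal A$, i.e. (1) for each $i$, $\mathbb R^n_{\ge0}$ is a cone of the inner normal fan of $\operatorname{conv}(\mathcal A_i)$; (2) each $\operatorname{conv}(\mathcal A_i)$ meets every coordinate hyperplane; (3) $\mathcal A_0$ contains a "vector of unity" (a standard basis vector $e_j$). $X$ is a proper normal toric variety with fan $\Sigma$ appropriate for $\mathcal A$: $\Sigma$ refines each normal fan of $\operatorname{conv}(\mathcal A_i)$, $\mathbb R^n_{\ge0}\in\Sigma$, and for generic $f_1,\dots,f_m$ the closure of $\{f_1=\dots=f_m=0\}$ in $X$ avoids $\operatorname{Sing}X$. Cox ring $S=\mathbb C[x_\rho:\rho\in\Sigma(1)]$, $x_j:=x_{e_j}$. $a_{\rho,0}=-\min\{\langle u,\rho\rangle:u\in\mathrm{Newt}(f_0)\}$ and $\tilde f_0=\sum_\alpha c_{\alpha,0}\prod_\rho x_\rho^{\langle\alpha,\rho\rangle+a_{\rho,0}}\in S$. The torus orbit $O(\sigma)$ of a cone $\sigma\in\Sigma$ corresponds, in Cox coordinates, to points with $x_\rho=0$ exactly for $\rho\subseteq\sigma$.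 *)

theory Defs
  imports "HOL-Analysis.Analysis"
begin

definition ivec :: "int^'n \<Rightarrow> real^'n" where
  "ivec v = (\<chi> i. real_of_int (v $ i))"

definition idot :: "int^'n \<Rightarrow> int^'n \<Rightarrow> int" where
  "idot a b = (\<Sum>i\<in>UNIV. a $ i * b $ i)"

definition unitvec :: "'n \<Rightarrow> int^'n" where
  "unitvec j = (\<chi> i. if i = j then 1 else 0)"

definition orthant :: "(real^'n) set" where
  "orthant = {u. \<forall>i. 0 \<le> u $ i}"

definition rational_cone :: "(real^'n) set \<Rightarrow> bool" where
  "rational_cone \<sigma> \<longleftrightarrow> (\<exists>S::(int^'n) set. finite S \<and>
      \<sigma> = {(\<Sum>v\<in>S. t v *\<^sub>R ivec v) | t. \<forall>v. 0 \<le> t v})"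

definition strongly_convex :: "(real^'n) set \<Rightarrow> bool" where
  "strongly_convex \<sigma> \<longleftrightarrow> (\<forall>x. x \<in> \<sigma> \<and> - x \<in> \<sigma> \<longrightarrow> x = 0)"

definition is_fan :: "(real^'n) set set \<Rightarrow> bool" where
  "is_fan \<Sigma> \<longleftrightarrow> finite \<Sigma>
     \<and> (\<forall>\<sigma>\<in>\<Sigma>. rational_cone \<sigma> \<and> strongly_convex \<sigma>)
     \<and> (\<forall>\<sigma>\<in>\<Sigma>. \<forall>\<tau>. \<tau> face_of \<sigma> \<and> \<tau> \<noteq> {} \<longrightarrow> \<tau> \<in> \<Sigma>)
     \<and> (\<forall>\<sigma>\<in>\<Sigma>. \<forall>\<tau>\<in>\<Sigma>. (\<sigma> \<inter> \<tau>) face_of \<sigma> \<and> (\<sigma> \<inter> \<tau>) face_of \<tau>)"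

text \<open>The toric variety X of the fan is proper iff the fan is complete.\<close>
definition complete_fan :: "(real^'n) set set \<Rightarrow> bool" where
  "complete_fan \<Sigma> \<longleftrightarrow> \<Union>\<Sigma> = UNIV"

definition primitive :: "int^'n \<Rightarrow> bool" where
  "primitive v \<longleftrightarrow> v \<noteq> 0 \<and> (\<forall>d::int. (\<forall>i. d dvd v $ i) \<longrightarrow> \<bar>d\<bar> = 1)"

definition ray_of :: "int^'n \<Rightarrow> (real^'n) set" where
  "ray_of v = {t *\<^sub>R ivec v | t. 0 \<le> t}"

text \<open>Sigma(1), each ray identified with its primitive generator.\<close>
definition rays :: "(real^'n) set set \<Rightarrow> (int^'n) set" where
  "rays \<Sigma> = {\<rho>. primitive \<rho> \<and> ray_of \<rho> \<in> \<Sigma>}"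

definition conv_pts :: "(int^'n) set \<Rightarrow> (real^'n) set" where
  "conv_pts A = convex hull (ivec ` A)"

definition normal_cone :: "(real^'n) set \<Rightarrow> (real^'n) set \<Rightarrow> (real^'n) set" where
  "normal_cone P F = {u. \<forall>x\<in>F. \<forall>y\<in>P. x \<bullet> u \<le> y \<bullet> u}"

definition normal_fan :: "(real^'n) set \<Rightarrow> (real^'n) set set" where
  "normal_fan P = {normal_cone P F | F. F face_of P \<and> F \<noteq> {}}"

definition refines :: "(real^'n) set set \<Rightarrow> (real^'n) set set \<Rightarrow> bool" where
  "refines \<Sigma> N \<longleftrightarrow> (\<forall>\<sigma>\<in>\<Sigma>. \<exists>C\<in>N. \<sigma> \<subseteq> C)"

definition admissible :: "nat \<Rightarrow> (nat \<Rightarrow> (int^'n) set) \<Rightarrow> bool" where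
  "admissible m A \<longleftrightarrow>
     (\<forall>i\<le>m. finite (A i) \<and> (\<forall>\<alpha>\<in>A i. \<forall>k. 0 \<le> \<alpha> $ k))
     \<and> (\<forall>i\<le>m. orthant \<in> normal_fan (conv_pts (A i)))
     \<and> (\<forall>i\<le>m. \<forall>k. \<exists>p\<in>conv_pts (A i). p $ k = 0)
     \<and> (\<exists>j. unitvec j \<in> A 0)"

text \<open>Fan appropriate for A (without the condition on Sing X).\<close>
definition appropriate_fan :: "nat \<Rightarrow> (nat \<Rightarrow> (int^'n) set) \<Rightarrow> (real^'n) set set \<Rightarrow> bool" where
  "appropriate_fan m A \<Sigma> \<longleftrightarrow> is_fan \<Sigma> \<and> complete_fan \<Sigma>
     \<and> (\<forall>i\<le>m. refines \<Sigma> (normal_fan (conv_pts (A i)))) \<and> orthant \<in> \<Sigma>"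

definition poly_on :: "'v set \<Rightarrow> (('v \<Rightarrow> complex) \<Rightarrow> complex) \<Rightarrow> bool" where
  "poly_on I p \<longleftrightarrow> (\<exists>M a. finite M \<and> (\<forall>e\<in>M. \<forall>v. v \<notin> I \<longrightarrow> e v = (0::nat))
      \<and> (\<forall>y. p y = (\<Sum>e\<in>M. a e * (\<Prod>v\<in>I. y v ^ e v))))"

definition zariski_open :: "'v set \<Rightarrow> ('v \<Rightarrow> complex) set \<Rightarrow> bool" where
  "zariski_open I U \<longleftrightarrow> (\<exists>S. (\<forall>p\<in>S. poly_on I p) \<and>
      U = {y. (\<forall>v. v \<notin> I \<longrightarrow> y v = 0) \<and> (\<exists>p\<in>S. p y \<noteq> 0)})"

definition coeff_index :: "nat \<Rightarrow> (nat \<Rightarrow> (int^'n) set) \<Rightarrow> (nat \<times> (int^'n)) set" where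
  "coeff_index m A = {(i, \<alpha>). i \<le> m \<and> \<alpha> \<in> A i}"

text \<open>A property of coefficient systems c (c i alpha = coefficient of X^alpha in f_i)
  holds generically: on a nonempty Zariski open subset of prod_i C^(A_i).\<close>
definition generic :: "nat \<Rightarrow> (nat \<Rightarrow> (int^'n) set) \<Rightarrow> ((nat \<Rightarrow> int^'n \<Rightarrow> complex) \<Rightarrow> bool) \<Rightarrow> bool" where
  "generic m A P \<longleftrightarrow> (\<exists>U. zariski_open (coeff_index m A) U \<and> U \<noteq> {} \<and>
      (\<forall>c. case_prod c \<in> U \<longrightarrow> P c))"

text \<open>a_rho = - min over Newt(f) of <u,rho>; the minimum of a linear form over the
  Newton polytope is attained at a support point.\<close>
definition a_coef :: "(int^'n) set \<Rightarrow> (int^'n \<Rightarrow> complex) \<Rightarrow> int^'n \<Rightarrow> int" where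
  "a_coef A c \<rho> = - Min {idot \<alpha> \<rho> | \<alpha>. \<alpha> \<in> A \<and> c \<alpha> \<noteq> 0}"

text \<open>Points of the Cox affine space are x :: int^'n => complex (coordinates x_rho, rho in Sigma(1)).\<close>
definition hom_poly :: "(real^'n) set set \<Rightarrow> (int^'n) set \<Rightarrow> (int^'n \<Rightarrow> complex)
    \<Rightarrow> (int^'n \<Rightarrow> complex) \<Rightarrow> complex" where
  "hom_poly \<Sigma> A c x = (\<Sum>\<alpha>\<in>A. c \<alpha> *
      (\<Prod>\<rho>\<in>rays \<Sigma>. x \<rho> ^ nat (idot \<alpha> \<rho> + a_coef A c \<rho>)))"

definition dhom_poly :: "(real^'n) set set \<Rightarrow> (int^'n) set \<Rightarrow> (int^'n \<Rightarrow> complex)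
    \<Rightarrow> 'n \<Rightarrow> (int^'n \<Rightarrow> complex) \<Rightarrow> complex" where
  "dhom_poly \<Sigma> A c j x = deriv (\<lambda>t. hom_poly \<Sigma> A c (x(unitvec j := t))) (x (unitvec j))"

text \<open>Torus orbit O(sigma) in Cox coordinates: x_rho = 0 exactly for rho contained in sigma.\<close>
definition orbit_cox :: "(real^'n) set set \<Rightarrow> (real^'n) set \<Rightarrow> (int^'n \<Rightarrow> complex) set" where
  "orbit_cox \<Sigma> \<sigma> = {x. \<forall>\<rho>\<in>rays \<Sigma>. x \<rho> = 0 \<longleftrightarrow> ivec \<rho> \<in> \<sigma>}"

end

theory Submission imports Defs begin


definition cmono :: "'v set \<Rightarrow> ('v \<Rightarrow> nat) \<Rightarrow> ('v \<Rightarrow> complex) \<Rightarrow> complex" where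
  "cmono I e y = (\<Prod>v\<in>I. y v ^ e v)"

lemma poly_on_alt: "poly_on I p \<longleftrightarrow> (\<exists>M a. finite M \<and> (\<forall>e\<in>M. \<forall>v. v \<notin> I \<longrightarrow> e v = 0)
      \<and> (\<forall>y. p y = (\<Sum>e\<in>M. a e * cmono I e y)))"
  unfolding poly_on_def cmono_def by simp

lemma poly_on_const: "poly_on I (\<lambda>y. k)"
  unfolding poly_on_alt
  by (rule exI[of _ "{\<lambda>_. 0}"], rule exI[of _ "\<lambda>_. k"]) (simp add: cmono_def)

lemma poly_on_var: assumes "finite I" "v \<in> I" shows "poly_on I (\<lambda>y. y v)"
proof -
  have "cmono I (\<lambda>u. if u = v then 1 else 0) y = y v" for y
  proof -
    have "cmono I (\<lambda>u. if u = v then 1 else 0) y = (\<Prod>u\<in>I. if u = v then y u else 1)"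
      unfolding cmono_def by (rule prod.cong) auto
    also have "\<dots> = y v" using assms by (simp add: prod.delta)
    finally show ?thesis .
  qed
  then show ?thesis unfolding poly_on_alt
    by (intro exI[of _ "{\<lambda>u. if u = v then 1 else 0}"] exI[of _ "\<lambda>_. 1"]) (auto simp: assms)
qed

lemma poly_on_add: assumes "poly_on I p" "poly_on I q" shows "poly_on I (\<lambda>y. p y + q y)"
proof -
  obtain M1 a1 where 1: "finite M1" "\<forall>e\<in>M1. \<forall>v. v \<notin> I \<longrightarrow> e v = 0" "\<forall>y. p y = (\<Sum>e\<in>M1. a1 e * cmono I e y)"
    using assms(1) unfolding poly_on_alt by blast
  obtain M2 a2 where 2: "finite M2" "\<forall>e\<in>M2. \<forall>v. v \<notin> I \<longrightarrow> e v = 0" "\<forall>y. q y = (\<Sum>e\<in>M2. a2 e * cmono I e y)"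
    using assms(2) unfolding poly_on_alt by blast
  define a where "a e = (if e \<in> M1 then a1 e else 0) + (if e \<in> M2 then a2 e else 0)" for e
  have "p y + q y = (\<Sum>e\<in>M1 \<union> M2. a e * cmono I e y)" for y
  proof -
    have s1: "(\<Sum>e\<in>M1 \<union> M2. (if e \<in> M1 then a1 e else 0) * cmono I e y) = (\<Sum>e\<in>M1. a1 e * cmono I e y)"
      by (rule sum.mono_neutral_cong_right) (use 1 2 in auto)
    have s2: "(\<Sum>e\<in>M1 \<union> M2. (if e \<in> M2 then a2 e else 0) * cmono I e y) = (\<Sum>e\<in>M2. a2 e * cmono I e y)"
      by (rule sum.mono_neutral_cong_right) (use 1 2 in auto)
    show ?thesis unfolding a_def distrib_right sum.distrib s1 s2 using 1 2 by simp
  qed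
  then show ?thesis unfolding poly_on_alt
    by (intro exI[of _ "M1 \<union> M2"] exI[of _ a]) (use 1 2 in auto)
qed

lemma cmono_add: "cmono I (\<lambda>v. e1 v + e2 v) y = cmono I e1 y * cmono I e2 y"
  unfolding cmono_def by (simp add: power_add prod.distrib)

lemma poly_on_mult: assumes "poly_on I p" "poly_on I q" shows "poly_on I (\<lambda>y. p y * q y)"
proof -
  obtain M1 a1 where 1: "finite M1" "\<forall>e\<in>M1. \<forall>v. v \<notin> I \<longrightarrow> e v = 0" "\<forall>y. p y = (\<Sum>e\<in>M1. a1 e * cmono I e y)"
    using assms(1) unfolding poly_on_alt by blast
  obtain M2 a2 where 2: "finite M2" "\<forall>e\<in>M2. \<forall>v. v \<notin> I \<longrightarrow> e v = 0" "\<forall>y. q y = (\<Sum>e\<in>M2. a2 e * cmono I e y)"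
    using assms(2) unfolding poly_on_alt by blast
  define g where "g = (\<lambda>(e1::'a\<Rightarrow>nat, e2::'a\<Rightarrow>nat). (\<lambda>v. e1 v + e2 v))"
  define S where "S = M1 \<times> M2"
  define a where "a e = (\<Sum>z\<in>{z \<in> S. g z = e}. a1 (fst z) * a2 (snd z))" for e
  have fS: "finite S" using 1 2 unfolding S_def by simp
  have "p y * q y = (\<Sum>e\<in>g ` S. a e * cmono I e y)" for y
  proof -
    have "p y * q y = (\<Sum>z\<in>S. a1 (fst z) * a2 (snd z) * cmono I (g z) y)"
      unfolding 1(3)[rule_format] 2(3)[rule_format] sum_product S_def sum.cartesian_product
      by (rule sum.cong) (auto simp: g_def cmono_add)
    also have "\<dots> = (\<Sum>e\<in>g ` S. \<Sum>z\<in>{z \<in> S. g z = e}. a1 (fst z) * a2 (snd z) * cmono I (g z) y)"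
      by (rule sum.group[symmetric]) (use fS in auto)
    also have "\<dots> = (\<Sum>e\<in>g ` S. a e * cmono I e y)"
      unfolding a_def sum_distrib_right by (rule sum.cong) auto
    finally show ?thesis .
  qed
  moreover have "\<forall>e\<in>g ` S. \<forall>v. v \<notin> I \<longrightarrow> e v = 0" using 1 2 by (auto simp: g_def S_def)
  ultimately show ?thesis unfolding poly_on_alt
    by (intro exI[of _ "g ` S"] exI[of _ a]) (use fS in auto)
qed

lemma poly_on_sum: "finite F \<Longrightarrow> (\<And>i. i \<in> F \<Longrightarrow> poly_on I (f i)) \<Longrightarrow> poly_on I (\<lambda>y. \<Sum>i\<in>F. f i y)"
  by (induction F rule: finite_induct) (auto intro: poly_on_add poly_on_const)

lemma poly_on_prod: "finite F \<Longrightarrow> (\<And>i. i \<in> F \<Longrightarrow> poly_on I (f i)) \<Longrightarrow> poly_on I (\<lambda>y. \<Prod>i\<in>F. f i y)"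
  by (induction F rule: finite_induct) (auto intro: poly_on_mult poly_on_const)



lemma ivec_inner: "ivec a \<bullet> ivec b = real_of_int (idot a b)"
  unfolding ivec_def idot_def inner_vec_def by simp

lemma ivec_comp[simp]: "ivec a $ i = real_of_int (a $ i)"
  unfolding ivec_def by simp

lemma idot_unitvec: "idot a (unitvec k) = a $ k"
  unfolding idot_def unitvec_def by (simp add: if_distrib cong: if_cong)

lemma convex_orthant: "convex (orthant :: (real^'n) set)"
  unfolding convex_def orthant_def by (auto intro!: add_nonneg_nonneg mult_nonneg_nonneg)

lemma conv_pts_orthant:
  assumes "\<forall>\<alpha>\<in>A. \<forall>k. 0 \<le> \<alpha> $ k"
  shows "conv_pts A \<subseteq> orthant"
  unfolding conv_pts_def
  by (rule hull_minimal) (use assms convex_orthant in \<open>auto simp: orthant_def\<close>)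

lemma in_ray_ofI: "0 \<le> t \<Longrightarrow> t *\<^sub>R ivec v \<in> ray_of v"
  unfolding ray_of_def by blast

lemma ray_of_unitvec_face: "ray_of (unitvec k) face_of orthant"
  unfolding face_of_def
proof (intro conjI ballI impI)
  show "ray_of (unitvec k) \<subseteq> orthant"
    by (auto simp: ray_of_def orthant_def unitvec_def)
  show "convex (ray_of (unitvec k))"
    unfolding convex_def
  proof (intro ballI allI impI)
    fix x y u v assume "x \<in> ray_of (unitvec k)" "y \<in> ray_of (unitvec k)" and uv: "0 \<le> (u::real)" "0 \<le> v" "u + v = 1"
    then obtain t1 t2 where "x = t1 *\<^sub>R ivec (unitvec k)" "0 \<le> t1" "y = t2 *\<^sub>R ivec (unitvec k)" "0 \<le> t2"
      by (auto simp: ray_of_def)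
    then have "u *\<^sub>R x + v *\<^sub>R y = (u * t1 + v * t2) *\<^sub>R ivec (unitvec k)" "0 \<le> u * t1 + v * t2"
      using uv by (auto simp: scaleR_add_left)
    then show "u *\<^sub>R x + v *\<^sub>R y \<in> ray_of (unitvec k)" unfolding ray_of_def by blast
  qed
next
  fix a b x assume a: "a \<in> orthant" and b: "b \<in> orthant" and x: "x \<in> ray_of (unitvec k)"
    and seg: "x \<in> open_segment a b"
  obtain u where u: "0 < u" "u < 1" "x = (1 - u) *\<^sub>R a + u *\<^sub>R b"
    using seg by (auto simp: in_segment)
  obtain t where t: "x = t *\<^sub>R ivec (unitvec k)" using x by (auto simp: ray_of_def)
  have z: "a $ i = 0 \<and> b $ i = 0" if "i \<noteq> k" for i
  proof -
    have "x $ i = 0" using t that by (simp add: unitvec_def)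
    then have "(1 - u) * a $ i + u * b $ i = 0" using u by simp
    moreover have "0 \<le> a $ i" "0 \<le> b $ i" using a b by (auto simp: orthant_def)
    ultimately show ?thesis using u
      by (smt (verit) mult_pos_pos mult_nonneg_nonneg)
  qed
  have ea: "a = (a $ k) *\<^sub>R ivec (unitvec k)"
    by (rule vec_eq_iff[THEN iffD2]) (auto simp: unitvec_def z)
  have eb: "b = (b $ k) *\<^sub>R ivec (unitvec k)"
    by (rule vec_eq_iff[THEN iffD2]) (auto simp: unitvec_def z)
  have "0 \<le> a $ k" "0 \<le> b $ k" using a b unfolding orthant_def by auto
  then show "a \<in> ray_of (unitvec k)" "b \<in> ray_of (unitvec k)"
    using ea eb in_ray_ofI by metis+
qed

lemma primitive_unitvec: "primitive (unitvec k)"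
  unfolding primitive_def
proof (intro conjI allI impI)
  have u: "unitvec k $ k = 1" unfolding unitvec_def by simp
  show "unitvec k \<noteq> 0"
  proof
    assume "unitvec k = 0" then have "unitvec k $ k = 0" by simp
    then show False using u by simp
  qed
  fix d :: int assume "\<forall>i. d dvd unitvec k $ i"
  then have "d dvd unitvec k $ k" by blast
  then have "d dvd 1" using u by simp
  then show "\<bar>d\<bar> = 1" by simp
qed

lemma unitvec_rays:
  assumes "is_fan \<Sigma>" "orthant \<in> \<Sigma>"
  shows "unitvec k \<in> rays \<Sigma>"
proof -
  have "ray_of (unitvec k) \<noteq> {}" unfolding ray_of_def by auto
  then have "ray_of (unitvec k) \<in> \<Sigma>"
    using assms ray_of_unitvec_face unfolding is_fan_def by blast
  then show ?thesis unfolding rays_def using primitive_unitvec by auto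
qed

lemma ivec_scale_unit:
  assumes "\<forall>i. i \<noteq> k \<longrightarrow> \<rho> $ i = 0"
  shows "ivec \<rho> = real_of_int (\<rho> $ k) *\<^sub>R ivec (unitvec k)"
  by (rule vec_eq_iff[THEN iffD2]) (use assms in \<open>auto simp: unitvec_def\<close>)

lemma ray_in_orthant_unit:
  assumes fan: "is_fan \<Sigma>" "orthant \<in> \<Sigma>" and r: "\<rho> \<in> rays \<Sigma>" and o: "ivec \<rho> \<in> orthant"
  shows "\<exists>k. \<rho> = unitvec k"
proof -
  have prim: "primitive \<rho>" and R: "ray_of \<rho> \<in> \<Sigma>" using r by (auto simp: rays_def)
  have sub: "ray_of \<rho> \<subseteq> orthant"
    using o unfolding ray_of_def orthant_def by (auto intro!: mult_nonneg_nonneg)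
  have F: "ray_of \<rho> face_of orthant"
  proof -
    have "(ray_of \<rho> \<inter> orthant) face_of ray_of \<rho> \<and> (ray_of \<rho> \<inter> orthant) face_of orthant"
      using fan R unfolding is_fan_def by blast
    moreover have "ray_of \<rho> \<inter> orthant = ray_of \<rho>" using sub by blast
    ultimately show ?thesis by simp
  qed
  have nn: "0 \<le> \<rho> $ i" for i using o by (auto simp: orthant_def)
  have "\<rho> \<noteq> 0" using prim unfolding primitive_def by blast
  then have "\<exists>k. \<rho> $ k \<noteq> 0" unfolding vec_eq_iff zero_index by blast
  then obtain k where k: "\<rho> $ k \<noteq> 0" by blast
  have zero: "\<rho> $ i = 0" if "i \<noteq> k" for i
  proof (rule ccontr)
    assume ne: "\<rho> $ i \<noteq> 0"
    define a :: "real^'a" where "a = (2 * real_of_int (\<rho> $ k)) *\<^sub>R ivec (unitvec k)"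
    define b :: "real^'a" where "b = 2 *\<^sub>R ivec \<rho> - a"
    have ak: "a $ k = 2 * \<rho> $ k" "a $ i = 0" using that by (auto simp: a_def unitvec_def)
    have bk: "b $ k = 0" "b $ i = 2 * \<rho> $ i" using that by (auto simp: a_def b_def unitvec_def)
    have "a \<in> orthant" using nn by (auto simp: a_def orthant_def unitvec_def)
    moreover have "b \<in> orthant" using nn
      by (auto simp: a_def b_def orthant_def unitvec_def)
    moreover have "a \<noteq> b"
    proof
      assume "a = b" then have "a $ k = b $ k" by simp
      then show False using ak bk k by simp
    qed
    moreover have "ivec \<rho> = midpoint a b" unfolding midpoint_def b_def by (simp add: algebra_simps)
    moreover have "ivec \<rho> \<in> ray_of \<rho>" unfolding ray_of_def by (auto intro!: exI[of _ 1])
    ultimately have "a \<in> ray_of \<rho>"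
    proof -
      have "ivec \<rho> \<in> open_segment a b" using \<open>a \<noteq> b\<close> \<open>ivec \<rho> = midpoint a b\<close>
        by (simp add: midpoint_in_open_segment)
      then show ?thesis using F \<open>a \<in> orthant\<close> \<open>b \<in> orthant\<close> \<open>ivec \<rho> \<in> ray_of \<rho>\<close>
        unfolding face_of_def by blast
    qed
    then obtain t where t: "a = t *\<^sub>R ivec \<rho>" by (auto simp: ray_of_def)
    have "a $ i = t * \<rho> $ i" using t by simp
    then have "t * \<rho> $ i = 0" using ak(2) by simp
    then have "t = 0" using ne by simp
    then have "a $ k = 0" using t by simp
    then show False using ak k by simp
  qed
  have pos: "\<rho> $ k > 0" using nn[of k] k by simp
  have dv: "\<forall>i. \<rho> $ k dvd \<rho> $ i"
  proof
    fix i show "\<rho> $ k dvd \<rho> $ i"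
    proof (cases "i = k")
      case False then show ?thesis using zero[OF False] by simp
    qed simp
  qed
  have "\<forall>d::int. (\<forall>i. d dvd \<rho> $ i) \<longrightarrow> \<bar>d\<bar> = 1" using prim unfolding primitive_def by (rule conjunct2)
  then have "\<bar>\<rho> $ k\<bar> = 1" using dv by blast
  then have rk: "\<rho> $ k = 1" using pos by simp
  have comp: "\<rho> $ i = unitvec k $ i" for i
  proof (cases "i = k")
    case True then show ?thesis using rk unfolding unitvec_def by simp
  next
    case False then show ?thesis using zero[OF False] unfolding unitvec_def by simp
  qed
  have "\<rho> = unitvec k" by (intro vec_eq_iff[THEN iffD2] allI) (rule comp)
  then show ?thesis by blast
qed



lemma ray_of_inj:
  assumes p: "primitive \<rho>" "primitive \<rho>'" and eq: "ray_of \<rho> = ray_of \<rho>'"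
  shows "\<rho> = \<rho>'"
proof -
  have "ivec \<rho> \<in> ray_of \<rho>" unfolding ray_of_def by (auto intro!: exI[of _ 1])
  then obtain t where t: "ivec \<rho> = t *\<^sub>R ivec \<rho>'" "0 \<le> t" using eq by (auto simp: ray_of_def)
  have "\<rho>' \<noteq> 0" using p unfolding primitive_def by blast
  then have "\<exists>i. \<rho>' $ i \<noteq> 0" unfolding vec_eq_iff zero_index by blast
  then obtain i where i: "\<rho>' $ i \<noteq> 0" by blast
  have "\<rho> \<noteq> 0" using p unfolding primitive_def by blast
  then have "\<exists>j. \<rho> $ j \<noteq> 0" unfolding vec_eq_iff zero_index by blast
  then obtain j where j: "\<rho> $ j \<noteq> 0" by blast
  have comp: "real_of_int (\<rho> $ k) = t * real_of_int (\<rho>' $ k)" for k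
  proof -
    have "ivec \<rho> $ k = (t *\<^sub>R ivec \<rho>') $ k" using t by simp
    then show ?thesis by simp
  qed
  have tpos: "t > 0" using comp[of j] j t(2) by (cases "t = 0") auto
  define a where "a = \<rho> $ i"
  define b where "b = \<rho>' $ i"
  have cross: "\<rho> $ k * b = a * \<rho>' $ k" for k
  proof -
    have "real_of_int (\<rho> $ k * b) = real_of_int (a * \<rho>' $ k)"
      using comp[of k] comp[of i] unfolding a_def b_def by simp
    then show ?thesis by linarith
  qed
  have g0: "gcd a b \<noteq> 0" using i b_def by simp
  obtain p q where pq: "a = p * gcd a b" "b = q * gcd a b" "coprime p q"
    using gcd_coprime_exists[OF g0] by blast
  have gpos: "gcd a b > 0" using g0 by (simp add: order_le_neq_trans)
  have cross2: "\<rho> $ k * q = p * \<rho>' $ k" for k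
  proof -
    have "(\<rho> $ k * q) * gcd a b = \<rho> $ k * (q * gcd a b)" by (simp only: mult.assoc)
    also have "\<dots> = \<rho> $ k * b" using pq(2) by simp
    also have "\<dots> = a * \<rho>' $ k" by (rule cross)
    also have "\<dots> = (p * gcd a b) * \<rho>' $ k" using pq(1) by simp
    also have "\<dots> = (p * \<rho>' $ k) * gcd a b" by (simp only: ac_simps)
    finally have "(\<rho> $ k * q) * gcd a b = (p * \<rho>' $ k) * gcd a b" .
    then show ?thesis using g0 by (metis mult_right_cancel)
  qed
  have "q dvd \<rho>' $ k" for k
  proof -
    have "q dvd p * \<rho>' $ k" using cross2[of k] by (metis dvd_triv_right)
    then show ?thesis using pq(3) by (simp add: coprime_commute coprime_dvd_mult_right_iff)
  qed
  then have q1: "\<bar>q\<bar> = 1" using p(2) unfolding primitive_def by blast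
  have "p dvd \<rho> $ k" for k
  proof -
    have "p dvd \<rho> $ k * q" using cross2[of k] by (metis dvd_triv_left)
    then show ?thesis using pq(3) by (simp add: coprime_dvd_mult_left_iff)
  qed
  then have p1: "\<bar>p\<bar> = 1" using p(1) unfolding primitive_def by blast
  have "real_of_int a = t * real_of_int b" using comp[of i] unfolding a_def b_def by simp
  then have "real_of_int p * real_of_int (gcd a b) = t * (real_of_int q * real_of_int (gcd a b))"
    using pq by (metis of_int_mult)
  then have "real_of_int p * real_of_int (gcd a b) = (t * real_of_int q) * real_of_int (gcd a b)"
    by (simp only: mult.assoc)
  then have "real_of_int p = t * real_of_int q" using gpos by (metis mult_right_cancel of_int_0_less_iff less_irrefl)
  moreover have "p = 1 \<or> p = -1" "q = 1 \<or> q = -1" using p1 q1 by linarith+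
  ultimately have "p = q" using tpos by auto
  then have "\<rho> $ k = \<rho>' $ k" for k using cross2[of k] p1 by (cases "p = 1") auto
  then show ?thesis by (intro vec_eq_iff[THEN iffD2] allI)
qed

lemma finite_rays:
  assumes "finite \<Sigma>"
  shows "finite (rays \<Sigma>)"
proof (rule finite_imageD)
  show "finite (ray_of ` rays \<Sigma>)"
    by (rule finite_subset[OF _ assms]) (auto simp: rays_def)
  show "inj_on ray_of (rays \<Sigma>)"
    by (rule inj_onI) (auto simp: rays_def intro: ray_of_inj)
qed



definition a0 :: "(int^'n) set \<Rightarrow> int^'n \<Rightarrow> int" where
  "a0 A \<rho> = - Min ((\<lambda>\<alpha>. idot \<alpha> \<rho>) ` A)"

definition Nexp :: "(int^'n) set \<Rightarrow> int^'n \<Rightarrow> int^'n \<Rightarrow> nat" where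
  "Nexp A \<alpha> \<rho> = nat (idot \<alpha> \<rho> + a0 A \<rho>)"

lemma a_coef_eq:
  assumes "\<forall>\<alpha>\<in>A. c \<alpha> \<noteq> 0"
  shows "a_coef A c \<rho> = a0 A \<rho>"
proof -
  have "{idot \<alpha> \<rho> | \<alpha>. \<alpha> \<in> A \<and> c \<alpha> \<noteq> 0} = (\<lambda>\<alpha>. idot \<alpha> \<rho>) ` A" using assms by auto
  then show ?thesis unfolding a_coef_def a0_def by simp
qed

lemma a0_le: "finite A \<Longrightarrow> \<beta> \<in> A \<Longrightarrow> 0 \<le> idot \<beta> \<rho> + a0 A \<rho>"
  unfolding a0_def by (simp add: Min_le)

lemma a0_eq: "finite A \<Longrightarrow> \<alpha> \<in> A \<Longrightarrow> (\<forall>\<beta>\<in>A. idot \<alpha> \<rho> \<le> idot \<beta> \<rho>) \<Longrightarrow> idot \<alpha> \<rho> + a0 A \<rho> = 0"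
proof -
  assume "finite A" "\<alpha> \<in> A" "\<forall>\<beta>\<in>A. idot \<alpha> \<rho> \<le> idot \<beta> \<rho>"
  then have "Min ((\<lambda>\<alpha>. idot \<alpha> \<rho>) ` A) = idot \<alpha> \<rho>" by (intro Min_eqI) auto
  then show ?thesis unfolding a0_def by simp
qed

lemma a0_geq: "finite A \<Longrightarrow> \<alpha> \<in> A \<Longrightarrow> idot \<alpha> \<rho> + a0 A \<rho> = 0 \<Longrightarrow> \<beta> \<in> A \<Longrightarrow> idot \<alpha> \<rho> \<le> idot \<beta> \<rho>"
  using a0_le[of A \<beta> \<rho>] by simp

lemma zero_coord:
  fixes A :: "(int^'n) set"
  assumes fin: "finite A" and nn: "\<forall>\<alpha>\<in>A. \<forall>k. 0 \<le> \<alpha> $ k" and p: "p \<in> conv_pts A" "p $ k = 0"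
  shows "\<exists>\<alpha>\<in>A. \<alpha> $ k = 0"
proof (rule ccontr)
  assume "\<not> ?thesis"
  then have ge: "\<forall>\<alpha>\<in>A. 1 \<le> \<alpha> $ k" using nn by (metis int_one_le_iff_zero_less order_le_less)
  have cvx: "convex {x::real^'n. 1 \<le> x $ k}"
    unfolding convex_def
  proof (intro allI ballI impI, simp)
    fix x y :: "real^'n" and u v :: real
    assume "1 \<le> x $ k" "1 \<le> y $ k" "0 \<le> u" "0 \<le> v" "u + v = 1"
    then have "u * 1 \<le> u * x $ k" "v * 1 \<le> v * y $ k" by (simp_all only: mult_left_mono)
    then show "1 \<le> u * x $ k + v * y $ k" using \<open>u + v = 1\<close> by linarith
  qed
  have "conv_pts A \<subseteq> {x. 1 \<le> x $ k}"
    unfolding conv_pts_def by (rule hull_minimal) (use ge cvx in auto)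
  then show False using p by auto
qed

lemma a0_unit:
  assumes fin: "finite A" and nn: "\<forall>\<alpha>\<in>A. \<forall>k. 0 \<le> \<alpha> $ k" and z: "\<exists>\<alpha>\<in>A. \<alpha> $ k = 0"
  shows "a0 A (unitvec k) = 0"
proof -
  obtain \<alpha> where "\<alpha> \<in> A" "\<alpha> $ k = 0" using z by blast
  then have "idot \<alpha> (unitvec k) + a0 A (unitvec k) = 0"
    using nn by (intro a0_eq fin) (auto simp: idot_unitvec)
  then show ?thesis using \<open>\<alpha> $ k = 0\<close> by (simp add: idot_unitvec)
qed

lemma in_orthant:
  fixes A :: "(int^'n) set"
  assumes fin: "finite A" and nn: "\<forall>\<alpha>\<in>A. \<forall>k. 0 \<le> \<alpha> $ k" and z0: "0 \<in> A"
    and nf: "orthant \<in> normal_fan (conv_pts A)"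
    and pos: "\<forall>\<beta>\<in>A. 0 \<le> idot \<beta> \<rho>"
  shows "ivec \<rho> \<in> orthant"
proof -
  obtain F where F: "orthant = normal_cone (conv_pts A) F" "F face_of conv_pts A" "F \<noteq> {}"
    using nf unfolding normal_fan_def by blast
  define one :: "real^'n" where "one = (\<chi> i. 1)"
  have one: "one \<in> orthant" unfolding one_def orthant_def by simp
  have P0: "0 \<in> conv_pts A"
  proof -
    have "ivec 0 \<in> conv_pts A" unfolding conv_pts_def using z0 by (intro hull_inc) auto
    moreover have "ivec (0::int^'n) = 0" unfolding ivec_def by (simp add: vec_eq_iff)
    ultimately show ?thesis by simp
  qed
  have PO: "conv_pts A \<subseteq> orthant" by (rule conv_pts_orthant[OF nn])
  have Fz: "x = 0" if "x \<in> F" for x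
  proof -
    have xP: "x \<in> conv_pts A" using that F(2) face_of_imp_subset by blast
    have "x \<bullet> one \<le> 0 \<bullet> one" using F(1) one that P0 unfolding normal_cone_def by blast
    then have s: "(\<Sum>i\<in>UNIV. x $ i) \<le> 0" unfolding one_def inner_vec_def by simp
    have xn: "\<forall>i. 0 \<le> x $ i" using xP PO unfolding orthant_def by blast
    have "(\<Sum>i\<in>UNIV. x $ i) = 0" using s xn by (meson antisym sum_nonneg)
    then have "\<forall>i\<in>UNIV. x $ i = 0" using xn by (subst (asm) sum_nonneg_eq_0_iff) auto
    then show ?thesis by (intro vec_eq_iff[THEN iffD2] allI) simp
  qed
  have hs: "conv_pts A \<subseteq> {y. 0 \<le> y \<bullet> ivec \<rho>}"
    unfolding conv_pts_def
  proof (rule hull_minimal)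
    show "ivec ` A \<subseteq> {y. 0 \<le> y \<bullet> ivec \<rho>}" using pos by (auto simp: ivec_inner)
    have "convex {y. 0 \<le> ivec \<rho> \<bullet> y}" by (rule convex_halfspace_ge)
    then show "convex {y. 0 \<le> y \<bullet> ivec \<rho>}" by (simp add: inner_commute)
  qed
  have "ivec \<rho> \<in> normal_cone (conv_pts A) F"
    unfolding normal_cone_def
  proof (intro CollectI ballI)
    fix x y assume "x \<in> F" "y \<in> conv_pts A"
    then show "x \<bullet> ivec \<rho> \<le> y \<bullet> ivec \<rho>" using Fz[of x] hs by auto
  qed
  then show ?thesis using F(1) by simp
qed



lemma alive_exists:
  fixes A0 :: "(int^'n) set"
  assumes fin: "finite A0"
    and ref: "refines \<Sigma> (normal_fan (conv_pts A0))" and \<sigma>: "\<sigma> \<in> \<Sigma>"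
  shows "\<exists>\<alpha>\<in>A0. \<forall>\<rho>. ivec \<rho> \<in> \<sigma> \<longrightarrow> idot \<alpha> \<rho> + a0 A0 \<rho> = 0"
proof -
  obtain C where C: "C \<in> normal_fan (conv_pts A0)" "\<sigma> \<subseteq> C" using ref \<sigma> unfolding refines_def by blast
  obtain F where F: "C = normal_cone (conv_pts A0) F" "F face_of conv_pts A0" "F \<noteq> {}"
    using C(1) unfolding normal_fan_def by blast
  have "compact (ivec ` A0)" using fin by (intro finite_imp_compact) simp
  moreover have "F face_of convex hull (ivec ` A0)" using F(2) unfolding conv_pts_def .
  ultimately obtain S' where S': "S' \<subseteq> ivec ` A0" "F = convex hull S'"
    by (rule face_of_convex_hull_subset)
  then have "S' \<noteq> {}" using F(3) by auto
  then obtain z where "z \<in> S'" by blast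
  then obtain \<alpha> where \<alpha>: "\<alpha> \<in> A0" "ivec \<alpha> \<in> S'" using S'(1) by (metis imageE subsetD)
  have "ivec \<alpha> \<in> convex hull S'" using \<alpha>(2) by (rule hull_inc)
  then have \<alpha>F: "ivec \<alpha> \<in> F" using S'(2) by simp
  have "idot \<alpha> \<rho> + a0 A0 \<rho> = 0" if "ivec \<rho> \<in> \<sigma>" for \<rho>
  proof (rule a0_eq[OF fin \<alpha>(1)], intro ballI)
    fix \<beta> assume "\<beta> \<in> A0"
    then have "ivec \<beta> \<in> conv_pts A0" unfolding conv_pts_def by (intro hull_inc) auto
    moreover have "ivec \<rho> \<in> normal_cone (conv_pts A0) F" using that C(2) F(1) by blast
    ultimately have "ivec \<alpha> \<bullet> ivec \<rho> \<le> ivec \<beta> \<bullet> ivec \<rho>" using \<alpha>F unfolding normal_cone_def by blast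
    then show "idot \<alpha> \<rho> \<le> idot \<beta> \<rho>" by (simp add: ivec_inner)
  qed
  then show ?thesis using \<alpha>(1) by blast
qed

lemma core:
  fixes A0 :: "(int^'n) set"
  assumes fin: "finite A0" and nn: "\<forall>\<alpha>\<in>A0. \<forall>k. 0 \<le> \<alpha> $ k"
   and nf: "orthant \<in> normal_fan (conv_pts A0)"
   and zc: "\<forall>k. \<exists>\<alpha>\<in>A0. \<alpha> $ k = 0"
   and j0: "unitvec j0 \<in> A0"
   and fan: "is_fan \<Sigma>" "orthant \<in> \<Sigma>"
   and ref: "refines \<Sigma> (normal_fan (conv_pts A0))"
   and \<sigma>: "\<sigma> \<in> \<Sigma>"
  shows "\<exists>j. \<exists>\<alpha>\<in>A0. (\<forall>\<rho>\<in>rays \<Sigma> - {unitvec j}. ivec \<rho> \<in> \<sigma> \<longrightarrow> Nexp A0 \<alpha> \<rho> = 0)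
     \<and> 1 \<le> Nexp A0 \<alpha> (unitvec j) \<and> (ivec (unitvec j) \<in> \<sigma> \<longrightarrow> Nexp A0 \<alpha> (unitvec j) = 1)"
proof -
  have au: "a0 A0 (unitvec k) = 0" for k using a0_unit[OF fin nn] zc by blast
  obtain \<alpha> where \<alpha>: "\<alpha> \<in> A0" "\<forall>\<rho>. ivec \<rho> \<in> \<sigma> \<longrightarrow> idot \<alpha> \<rho> + a0 A0 \<rho> = 0"
    using alive_exists[OF fin ref \<sigma>] by blast
  show ?thesis
  proof (cases "\<exists>k. \<alpha> $ k \<noteq> 0")
    case True
    then obtain k where k: "\<alpha> $ k \<noteq> 0" by blast
    have "0 \<le> \<alpha> $ k" using nn \<alpha>(1) by blast
    then have ge: "1 \<le> \<alpha> $ k" using k by presburger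
    have N: "Nexp A0 \<alpha> (unitvec k) = nat (\<alpha> $ k)" unfolding Nexp_def by (simp add: au idot_unitvec)
    have notin: "ivec (unitvec k) \<notin> \<sigma>"
    proof
      assume "ivec (unitvec k) \<in> \<sigma>"
      then have "idot \<alpha> (unitvec k) + a0 A0 (unitvec k) = 0" using \<alpha>(2) by blast
      then show False using k by (simp add: au idot_unitvec)
    qed
    have "\<forall>\<rho>\<in>rays \<Sigma> - {unitvec k}. ivec \<rho> \<in> \<sigma> \<longrightarrow> Nexp A0 \<alpha> \<rho> = 0"
      using \<alpha>(2) unfolding Nexp_def by simp
    then show ?thesis using \<alpha>(1) N ge notin by (intro exI[of _ k] bexI[of _ \<alpha>]) auto
  next
    case False
    then have a0z: "\<alpha> = 0" by (intro vec_eq_iff[THEN iffD2] allI) simp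
    have z0: "0 \<in> A0" using \<alpha>(1) a0z by simp
    have "Nexp A0 (unitvec j0) \<rho> = 0" if \<rho>: "\<rho> \<in> rays \<Sigma> - {unitvec j0}" "ivec \<rho> \<in> \<sigma>" for \<rho>
    proof -
      have e: "idot 0 \<rho> + a0 A0 \<rho> = 0" using \<alpha>(2) \<rho>(2) a0z by blast
      have id0: "idot 0 \<rho> = 0" unfolding idot_def by simp
      have pos: "\<forall>\<beta>\<in>A0. 0 \<le> idot \<beta> \<rho>" using a0_geq[OF fin z0 e] id0 by simp
      have "ivec \<rho> \<in> orthant" by (rule in_orthant[OF fin nn z0 nf pos])
      then obtain k where k: "\<rho> = unitvec k" using ray_in_orthant_unit[OF fan] \<rho>(1) by blast
      then have "k \<noteq> j0" using \<rho>(1) by auto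
      then have "idot (unitvec j0) \<rho> = 0" unfolding k idot_unitvec by (simp add: unitvec_def)
      moreover have "a0 A0 \<rho> = 0" using e id0 by simp
      ultimately show ?thesis unfolding Nexp_def by simp
    qed
    moreover have "Nexp A0 (unitvec j0) (unitvec j0) = 1"
    proof -
      have "idot (unitvec j0) (unitvec j0) = 1" unfolding idot_unitvec by (simp add: unitvec_def)
      then show ?thesis unfolding Nexp_def au by simp
    qed
    ultimately show ?thesis using j0 by (intro exI[of _ j0] bexI[of _ "unitvec j0"]) auto
  qed
qed

lemma dhom_formula:
  fixes \<Sigma> :: "(real^'n) set set"
  assumes fr: "finite (rays \<Sigma>)" and ej: "unitvec j \<in> rays \<Sigma>" and c: "\<forall>\<alpha>\<in>A0. c \<alpha> \<noteq> 0"
  shows "dhom_poly \<Sigma> A0 c j x = (\<Sum>\<alpha>\<in>A0. c \<alpha> * (\<Prod>\<rho>\<in>rays \<Sigma> - {unitvec j}. x \<rho> ^ Nexp A0 \<alpha> \<rho>)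
           * (of_nat (Nexp A0 \<alpha> (unitvec j)) * (1 * x (unitvec j) ^ (Nexp A0 \<alpha> (unitvec j) - Suc 0))))"
proof -
  have hp: "hom_poly \<Sigma> A0 c (x(unitvec j := t)) =
     (\<Sum>\<alpha>\<in>A0. c \<alpha> * (\<Prod>\<rho>\<in>rays \<Sigma> - {unitvec j}. x \<rho> ^ Nexp A0 \<alpha> \<rho>) * t ^ Nexp A0 \<alpha> (unitvec j))" for t
    unfolding hom_poly_def a_coef_eq[OF c]
  proof (rule sum.cong[OF refl])
    fix \<alpha> assume "\<alpha> \<in> A0"
    have "(\<Prod>\<rho>\<in>rays \<Sigma>. (x(unitvec j := t)) \<rho> ^ nat (idot \<alpha> \<rho> + a0 A0 \<rho>))
        = (x(unitvec j := t)) (unitvec j) ^ nat (idot \<alpha> (unitvec j) + a0 A0 (unitvec j))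
          * (\<Prod>\<rho>\<in>rays \<Sigma> - {unitvec j}. (x(unitvec j := t)) \<rho> ^ nat (idot \<alpha> \<rho> + a0 A0 \<rho>))"
      by (rule prod.remove[OF fr ej])
    also have "\<dots> = t ^ Nexp A0 \<alpha> (unitvec j) * (\<Prod>\<rho>\<in>rays \<Sigma> - {unitvec j}. x \<rho> ^ Nexp A0 \<alpha> \<rho>)"
      unfolding Nexp_def by (auto intro!: prod.cong)
    finally show "c \<alpha> * (\<Prod>\<rho>\<in>rays \<Sigma>. (x(unitvec j := t)) \<rho> ^ nat (idot \<alpha> \<rho> + a0 A0 \<rho>)) =
       c \<alpha> * (\<Prod>\<rho>\<in>rays \<Sigma> - {unitvec j}. x \<rho> ^ Nexp A0 \<alpha> \<rho>) * t ^ Nexp A0 \<alpha> (unitvec j)"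
      by (simp add: ac_simps)
  qed
  have D: "((\<lambda>t. \<Sum>\<alpha>\<in>A0. c \<alpha> * (\<Prod>\<rho>\<in>rays \<Sigma> - {unitvec j}. x \<rho> ^ Nexp A0 \<alpha> \<rho>) * t ^ Nexp A0 \<alpha> (unitvec j))
     has_field_derivative (\<Sum>\<alpha>\<in>A0. c \<alpha> * (\<Prod>\<rho>\<in>rays \<Sigma> - {unitvec j}. x \<rho> ^ Nexp A0 \<alpha> \<rho>)
           * (of_nat (Nexp A0 \<alpha> (unitvec j)) * (1 * x (unitvec j) ^ (Nexp A0 \<alpha> (unitvec j) - Suc 0))))) (at (x (unitvec j)))"
    by (intro DERIV_sum DERIV_cmult DERIV_power DERIV_ident)
  show ?thesis unfolding dhom_poly_def hp by (rule DERIV_imp_deriv[OF D])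
qed

lemma prod_indicator_pow:
  fixes R :: "'r set" and f :: "'r \<Rightarrow> complex"
  assumes "finite R" "\<forall>\<rho>\<in>R. f \<rho> = 0 \<or> f \<rho> = 1"
  shows "(\<Prod>\<rho>\<in>R. f \<rho> ^ N \<rho>) = (if (\<forall>\<rho>\<in>R. f \<rho> = 0 \<longrightarrow> N \<rho> = 0) then 1 else 0)"
proof (cases "\<forall>\<rho>\<in>R. f \<rho> = 0 \<longrightarrow> N \<rho> = 0")
  case True
  then have "\<forall>\<rho>\<in>R. f \<rho> ^ N \<rho> = 1" using assms(2) by auto
  then show ?thesis using True by simp
next
  case False
  then obtain \<rho> where "\<rho> \<in> R" "f \<rho> = 0" "N \<rho> \<noteq> 0" by blast
  then have "(\<Prod>\<rho>\<in>R. f \<rho> ^ N \<rho>) = 0" using assms(1) by (intro prod_zero) auto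
  then show ?thesis using False by simp
qed

definition xs :: "(real^'n) set \<Rightarrow> int^'n \<Rightarrow> complex" where
  "xs \<sigma> \<rho> = (if ivec \<rho> \<in> \<sigma> then 0 else 1)"

definition wt :: "(real^'n) set set \<Rightarrow> (int^'n) set \<Rightarrow> (real^'n) set \<Rightarrow> 'n \<Rightarrow> int^'n \<Rightarrow> nat" where
  "wt \<Sigma> A0 \<sigma> j \<alpha> = (if (\<forall>\<rho>\<in>rays \<Sigma> - {unitvec j}. ivec \<rho> \<in> \<sigma> \<longrightarrow> Nexp A0 \<alpha> \<rho> = 0)
     then Nexp A0 \<alpha> (unitvec j) * (if ivec (unitvec j) \<in> \<sigma> then 0 ^ (Nexp A0 \<alpha> (unitvec j) - 1) else 1) else 0)"

lemma dhom_value: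
  fixes \<Sigma> :: "(real^'n) set set"
  assumes fr: "finite (rays \<Sigma>)" and ej: "unitvec j \<in> rays \<Sigma>" and c: "\<forall>\<alpha>\<in>A0. c \<alpha> \<noteq> 0"
  shows "dhom_poly \<Sigma> A0 c j (xs \<sigma>) = (\<Sum>\<alpha>\<in>A0. c \<alpha> * of_nat (wt \<Sigma> A0 \<sigma> j \<alpha>))"
  unfolding dhom_formula[OF fr ej c]
proof (rule sum.cong[OF refl])
  fix \<alpha> assume "\<alpha> \<in> A0"
  have fr': "finite (rays \<Sigma> - {unitvec j})" using fr by simp
  have pr: "(\<Prod>\<rho>\<in>rays \<Sigma> - {unitvec j}. xs \<sigma> \<rho> ^ Nexp A0 \<alpha> \<rho>) =
     (if (\<forall>\<rho>\<in>rays \<Sigma> - {unitvec j}. ivec \<rho> \<in> \<sigma> \<longrightarrow> Nexp A0 \<alpha> \<rho> = 0) then 1 else 0)"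
    by (subst prod_indicator_pow[OF fr']) (auto simp: xs_def)
  show "c \<alpha> * (\<Prod>\<rho>\<in>rays \<Sigma> - {unitvec j}. xs \<sigma> \<rho> ^ Nexp A0 \<alpha> \<rho>) *
         (of_nat (Nexp A0 \<alpha> (unitvec j)) * (1 * xs \<sigma> (unitvec j) ^ (Nexp A0 \<alpha> (unitvec j) - Suc 0))) =
         c \<alpha> * of_nat (wt \<Sigma> A0 \<sigma> j \<alpha>)"
  proof (cases "\<forall>\<rho>\<in>rays \<Sigma> - {unitvec j}. ivec \<rho> \<in> \<sigma> \<longrightarrow> Nexp A0 \<alpha> \<rho> = 0")
    case True
    then have p1: "(\<Prod>\<rho>\<in>rays \<Sigma> - {unitvec j}. xs \<sigma> \<rho> ^ Nexp A0 \<alpha> \<rho>) = 1" using pr by simp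
    show ?thesis
    proof (cases "ivec (unitvec j) \<in> \<sigma>")
      case True2: True
      then have "xs \<sigma> (unitvec j) = 0" by (simp add: xs_def)
      then show ?thesis unfolding p1 wt_def using True True2 by simp
    next
      case False2: False
      then have "xs \<sigma> (unitvec j) = 1" by (simp add: xs_def)
      then show ?thesis unfolding p1 wt_def using True False2 by simp
    qed
  next
    case False
    then have p0: "(\<Prod>\<rho>\<in>rays \<Sigma> - {unitvec j}. xs \<sigma> \<rho> ^ Nexp A0 \<alpha> \<rho>) = 0" using pr by simp
    have "wt \<Sigma> A0 \<sigma> j \<alpha> = 0" unfolding wt_def by (rule if_not_P[OF False])
    then show ?thesis unfolding p0 by simp
  qed
qed

lemma finite_coeff_index:
  assumes "\<forall>i\<le>m. finite (A i)"
  shows "finite (coeff_index m A)"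
proof -
  have "coeff_index m A = Sigma {..m} A" unfolding coeff_index_def by auto
  moreover have "finite (Sigma {..m} A)" by (rule finite_SigmaI) (use assms in auto)
  ultimately show ?thesis by simp
qed

theorem mainTheorem16:
  fixes m :: nat
    and A :: "nat \<Rightarrow> (int^'n) set"
    and \<Sigma> :: "(real^'n) set set"
  assumes "admissible m A"
    and "appropriate_fan m A \<Sigma>"
  shows "generic m A (\<lambda>c. \<forall>\<sigma>\<in>\<Sigma>. \<exists>x\<in>orbit_cox \<Sigma> \<sigma>. \<exists>j. dhom_poly \<Sigma> (A 0) (c 0) j x \<noteq> 0)"
proof -
  define A0 where "A0 = A 0"
  define I where "I = coeff_index m A"
  have adm: "\<forall>i\<le>m. finite (A i) \<and> (\<forall>\<alpha>\<in>A i. \<forall>k. 0 \<le> \<alpha> $ k)"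
     "\<forall>i\<le>m. orthant \<in> normal_fan (conv_pts (A i))"
     "\<forall>i\<le>m. \<forall>k. \<exists>p\<in>conv_pts (A i). p $ k = 0"
     "\<exists>j. unitvec j \<in> A 0"
    using assms(1) unfolding admissible_def by blast+
  have fin: "finite A0" and nn: "\<forall>\<alpha>\<in>A0. \<forall>k. 0 \<le> \<alpha> $ k" using adm(1) unfolding A0_def by auto
  have nf: "orthant \<in> normal_fan (conv_pts A0)" using adm(2) unfolding A0_def by auto
  have zc: "\<forall>k. \<exists>\<alpha>\<in>A0. \<alpha> $ k = 0"
  proof
    fix k
    obtain p where "p \<in> conv_pts A0" "p $ k = 0" using adm(3) unfolding A0_def by blast
    then show "\<exists>\<alpha>\<in>A0. \<alpha> $ k = 0" by (rule zero_coord[OF fin nn])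
  qed
  obtain j0 where j0: "unitvec j0 \<in> A0" using adm(4) unfolding A0_def by blast
  have fan: "is_fan \<Sigma>" "orthant \<in> \<Sigma>" and ref: "refines \<Sigma> (normal_fan (conv_pts A0))"
    using assms(2) unfolding appropriate_fan_def A0_def by auto
  have finS: "finite \<Sigma>" using fan(1) unfolding is_fan_def by blast
  have fr: "finite (rays \<Sigma>)" by (rule finite_rays[OF finS])
  have finI: "finite I" unfolding I_def by (rule finite_coeff_index) (use adm(1) in blast)
  have I0: "(0, \<alpha>) \<in> I" if "\<alpha> \<in> A0" for \<alpha> using that unfolding I_def coeff_index_def A0_def by simp
  have exJ: "\<exists>j. unitvec j \<in> rays \<Sigma> \<and> (\<exists>\<alpha>\<in>A0. 0 < wt \<Sigma> A0 \<sigma> j \<alpha>)" if \<sigma>: "\<sigma> \<in> \<Sigma>" for \<sigma>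
  proof -
    obtain j \<alpha> where j: "\<alpha> \<in> A0" "\<forall>\<rho>\<in>rays \<Sigma> - {unitvec j}. ivec \<rho> \<in> \<sigma> \<longrightarrow> Nexp A0 \<alpha> \<rho> = 0"
      "1 \<le> Nexp A0 \<alpha> (unitvec j)" "ivec (unitvec j) \<in> \<sigma> \<longrightarrow> Nexp A0 \<alpha> (unitvec j) = 1"
      using core[OF fin nn nf zc j0 fan ref \<sigma>] by blast
    have "0 < wt \<Sigma> A0 \<sigma> j \<alpha>" unfolding wt_def using j(2-4) by auto
    then show ?thesis using unitvec_rays[OF fan] j(1) by blast
  qed
  define J where "J \<sigma> = (SOME j. unitvec j \<in> rays \<Sigma> \<and> (\<exists>\<alpha>\<in>A0. 0 < wt \<Sigma> A0 \<sigma> j \<alpha>))" for \<sigma>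
  have J: "unitvec (J \<sigma>) \<in> rays \<Sigma> \<and> (\<exists>\<alpha>\<in>A0. 0 < wt \<Sigma> A0 \<sigma> (J \<sigma>) \<alpha>)" if "\<sigma> \<in> \<Sigma>" for \<sigma>
    unfolding J_def by (rule someI_ex[OF exJ[OF that]])
  define L where "L \<sigma> y = (\<Sum>\<alpha>\<in>A0. y (0::nat, \<alpha>) * (of_nat (wt \<Sigma> A0 \<sigma> (J \<sigma>) \<alpha>) :: complex))" for \<sigma> y
  define P where "P y = (\<Prod>\<alpha>\<in>A0. y (0::nat, \<alpha>)) * (\<Prod>\<sigma>\<in>\<Sigma>. L \<sigma> y)" for y
  define U where "U = {y. (\<forall>v. v \<notin> I \<longrightarrow> y v = 0) \<and> (\<exists>p\<in>{P}. p y \<noteq> 0)}"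
  have polyP: "poly_on I P"
  proof -
    have v: "poly_on I (\<lambda>y. y (0, \<alpha>))" if "\<alpha> \<in> A0" for \<alpha> by (rule poly_on_var[OF finI I0[OF that]])
    have "poly_on I (L \<sigma>)" for \<sigma>
      unfolding L_def by (intro poly_on_sum fin poly_on_mult v poly_on_const)
    then show ?thesis unfolding P_def by (intro poly_on_mult poly_on_prod fin finS v)
  qed
  have zo: "zariski_open I U" unfolding zariski_open_def U_def using polyP by blast
  define y0 where "y0 v = (if v \<in> I then 1 else 0 :: complex)" for v
  have "y0 \<in> U"
  proof -
    have "(\<Prod>\<alpha>\<in>A0. y0 (0, \<alpha>)) = 1" by (rule prod.neutral) (simp add: y0_def I0)
    moreover have "L \<sigma> y0 \<noteq> 0" if s: "\<sigma> \<in> \<Sigma>" for \<sigma>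
    proof -
      obtain \<alpha> where \<alpha>: "\<alpha> \<in> A0" "0 < wt \<Sigma> A0 \<sigma> (J \<sigma>) \<alpha>" using J[OF s] by blast
      have "L \<sigma> y0 = of_nat (\<Sum>\<alpha>\<in>A0. wt \<Sigma> A0 \<sigma> (J \<sigma>) \<alpha>)"
        unfolding L_def of_nat_sum by (rule sum.cong) (auto simp: y0_def I0)
      moreover have "wt \<Sigma> A0 \<sigma> (J \<sigma>) \<alpha> \<le> (\<Sum>\<alpha>\<in>A0. wt \<Sigma> A0 \<sigma> (J \<sigma>) \<alpha>)"
        by (rule member_le_sum[OF \<alpha>(1)]) (auto simp: fin)
      ultimately show ?thesis using \<alpha>(2) by (simp del: of_nat_sum)
    qed
    then have "(\<Prod>\<sigma>\<in>\<Sigma>. L \<sigma> y0) \<noteq> 0" using finS by (simp add: prod_zero_iff)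
    ultimately have "P y0 \<noteq> 0" unfolding P_def by simp
    moreover have "\<forall>v. v \<notin> I \<longrightarrow> y0 v = 0" by (simp add: y0_def)
    ultimately show ?thesis unfolding U_def by blast
  qed
  then have Une: "U \<noteq> {}" by blast
  have prp: "\<forall>\<sigma>\<in>\<Sigma>. \<exists>x\<in>orbit_cox \<Sigma> \<sigma>. \<exists>j. dhom_poly \<Sigma> (A 0) (c 0) j x \<noteq> 0"
    if cU: "case_prod c \<in> U" for c
  proof
    fix \<sigma> assume \<sigma>: "\<sigma> \<in> \<Sigma>"
    have Pc: "P (case_prod c) \<noteq> 0" using cU unfolding U_def by blast
    have c0: "\<forall>\<alpha>\<in>A0. c 0 \<alpha> \<noteq> 0"
    proof
      fix \<alpha> assume "\<alpha> \<in> A0"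
      then show "c 0 \<alpha> \<noteq> 0" using Pc fin unfolding P_def by (auto simp: prod_zero_iff)
    qed
    have Lc: "L \<sigma> (case_prod c) \<noteq> 0" using Pc finS \<sigma> unfolding P_def by (auto simp: prod_zero_iff)
    have "dhom_poly \<Sigma> A0 (c 0) (J \<sigma>) (xs \<sigma>) = L \<sigma> (case_prod c)"
      unfolding dhom_value[OF fr conjunct1[OF J[OF \<sigma>]] c0] L_def by simp
    then have "dhom_poly \<Sigma> (A 0) (c 0) (J \<sigma>) (xs \<sigma>) \<noteq> 0" using Lc unfolding A0_def by simp
    moreover have "xs \<sigma> \<in> orbit_cox \<Sigma> \<sigma>" unfolding orbit_cox_def xs_def by simp
    ultimately show "\<exists>x\<in>orbit_cox \<Sigma> \<sigma>. \<exists>j. dhom_poly \<Sigma> (A 0) (c 0) j x \<noteq> 0" by blast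
  qed
  show ?thesis unfolding generic_def I_def[symmetric]
    using zo Une prp by blast
qed
end
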